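(* Let $S_f=\{f_i\ge 0: i=1,\ldots,m_1\}$ and $S_g=\{g_i\ge0: i=1,\ldots,m_2\}$ be two pure inequality sets in the variables $\mathbf{x}=(x_1,\ldots,x_n)$, and let $S_{f'}$ and $S_{g'}$ be minimal characterization sets of $S_f$ and $S_g$ respectively. If $S_f$ and $S_g$ are equivalent, then $S_{f'}$ and $S_{g'}$ are trivially equivalent.
   Context: An inequality set is a finite set $S=\{f_i\ge 0: i=1,\ldots,m\}$ with each $f_i$ a nonzero homogeneous linear polynomial in $\mathbf{x}$ with real coefficients; its solutions are the points of $\mathbb{R}^n$ satisfying all inequalities; a subset of $S$ is an inequality set whose polynomials form a subset of $\{f_1,\ldots,f_m\}$. The equality $f_k=0$ is an implied equality of $S$ if $f_k(\mathbf{x})=0$ for every solution of $S$; $S$ is pure if it has no implied equalities. Inequalities $f_1\ge0,\ldots,f_k\ge0$ imply $f\ge0$ if every $\mathbf{x}$ satisfying the former satisfies $f(\mathbf{x})\ge0$; an inequality of a set is redundant if implied by the other inequalities of the set. Two inequality sets are equivalent if they have the same solution set. A subset $S'$ of $S$ is a minimal characterization set of $S$ if $S'$ is equivalent to $S$ and contains no redundant inequality. Two inequalities $f\ge0$ and $g\ge 0$ are trivially equivalent if $f=c\,g$ for some real $c>0$. Two inequality sets $S_f, S_g$ are trivially equivalent if they have the same number of inequalities, every inequality of $S_f$ is trivially equivalent to some inequality of $S_g$, and every inequality of $S_g$ is trivially equivalent to some inequality of $S_f$. *)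

theory Defs
  imports "HOL-Analysis.Analysis"
begin

text \<open>A nonzero homogeneous linear polynomial f(x) = a . x on R^n is represented by its
coefficient vector a :: real^'n (a \<noteq> 0). An inequality set is a finite set of such
coefficient vectors, each a standing for the inequality a . x \<ge> 0.\<close>

definition ineq_set :: "(real^'n) set \<Rightarrow> bool" where
  "ineq_set S \<longleftrightarrow> finite S \<and> (\<forall>a\<in>S. a \<noteq> 0)"

definition solutions :: "(real^'n) set \<Rightarrow> (real^'n) set" where
  "solutions S = {x. \<forall>a\<in>S. inner a x \<ge> 0}"

definition implied_equality :: "(real^'n) set \<Rightarrow> real^'n \<Rightarrow> bool" where
  "implied_equality S a \<longleftrightarrow> (\<forall>x\<in>solutions S. inner a x = 0)"

definition pure :: "(real^'n) set \<Rightarrow> bool" where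
  "pure S \<longleftrightarrow> (\<forall>a\<in>S. \<not> implied_equality S a)"

definition ineq_implies :: "(real^'n) set \<Rightarrow> real^'n \<Rightarrow> bool" where
  "ineq_implies T f \<longleftrightarrow> (\<forall>x. (\<forall>b\<in>T. inner b x \<ge> 0) \<longrightarrow> inner f x \<ge> 0)"

definition redundant :: "(real^'n) set \<Rightarrow> real^'n \<Rightarrow> bool" where
  "redundant S a \<longleftrightarrow> a \<in> S \<and> ineq_implies (S - {a}) a"

definition equivalent :: "(real^'n) set \<Rightarrow> (real^'n) set \<Rightarrow> bool" where
  "equivalent S T \<longleftrightarrow> solutions S = solutions T"

definition minimal_characterization :: "(real^'n) set \<Rightarrow> (real^'n) set \<Rightarrow> bool" where
  "minimal_characterization S' S \<longleftrightarrow>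
     S' \<subseteq> S \<and> equivalent S' S \<and> (\<forall>a\<in>S'. \<not> redundant S' a)"

definition triv_equiv_ineq :: "real^'n \<Rightarrow> real^'n \<Rightarrow> bool" where
  "triv_equiv_ineq f g \<longleftrightarrow> (\<exists>c::real. c > 0 \<and> f = c *\<^sub>R g)"

definition triv_equiv_sets :: "(real^'n) set \<Rightarrow> (real^'n) set \<Rightarrow> bool" where
  "triv_equiv_sets Sf Sg \<longleftrightarrow> card Sf = card Sg \<and>
     (\<forall>f\<in>Sf. \<exists>g\<in>Sg. triv_equiv_ineq f g) \<and>
     (\<forall>g\<in>Sg. \<exists>f\<in>Sf. triv_equiv_ineq f g)"

end

theory Submission
  imports Defs
begin

lemma open_pos_set:
  fixes T :: "(real^'n) set"
  assumes "finite T"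
  shows "open {x. \<forall>b\<in>T. inner b x > 0}"
proof -
  have "{x. \<forall>b\<in>T. inner b x > 0} = (\<Inter>b\<in>T. {x. inner b x > 0})" by auto
  moreover have "open (\<Inter>b\<in>T. {x::real^'n. inner b x > 0})"
    using assms by (intro open_INT) (auto intro: open_halfspace_gt)
  ultimately show ?thesis by simp
qed

lemma facet_lemma:
  fixes T T' :: "(real^'n) set"
  assumes finT: "finite T" and x0: "\<forall>b\<in>T. inner b x0 > 0" and aT: "a \<in> T"
    and irr: "\<not> ineq_implies (T - {a}) a"
    and finT': "finite T'" and nz: "\<forall>a'\<in>T'. a' \<noteq> 0"
    and eq: "solutions T' = solutions T"
  shows "\<exists>a'\<in>T'. \<exists>c>0. a' = c *\<^sub>R a"
proof -
  obtain y where y1: "\<forall>b\<in>T-{a}. inner b y \<ge> 0" and y2: "inner a y < 0"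
    using irr unfolding ineq_implies_def by force
  have ax0: "inner a x0 > 0" using x0 aT by blast
  have anz: "a \<noteq> 0" using ax0 by auto
  define t where "t = inner a x0 / (inner a x0 - inner a y)"
  have t0: "t > 0" and t1: "t < 1" using ax0 y2 unfolding t_def by (auto simp: field_simps)
  define z where "z = (1-t) *\<^sub>R x0 + t *\<^sub>R y"
  have az: "inner a z = 0"
  proof -
    have "inner a z = (1-t) * inner a x0 + t * inner a y" unfolding z_def by (simp add: inner_add_right)
    also have "\<dots> = 0" using ax0 y2 unfolding t_def by (simp add: field_simps)
    finally show ?thesis .
  qed
  have bz: "inner b z > 0" if "b \<in> T - {a}" for b
  proof -
    have "(1-t) * inner b x0 > 0" using t1 x0 that by auto
    moreover have "t * inner b y \<ge> 0" using t0 y1 that by auto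
    ultimately show ?thesis unfolding z_def by (simp add: inner_add_right)
  qed
  have zC: "z \<in> solutions T" unfolding solutions_def using az bz by force
  hence zC': "z \<in> solutions T'" using eq by simp
  have "\<exists>a'\<in>T'. inner a' z = 0"
  proof (rule ccontr)
    assume "\<not> ?thesis"
    hence pos: "\<forall>a'\<in>T'. inner a' z > 0" using zC' unfolding solutions_def
      by (force simp: order_le_less)
    define V where "V = {x. \<forall>b\<in>T'. inner b x > 0}"
    have "open V" unfolding V_def using open_pos_set finT' by blast
    moreover have "z \<in> V" unfolding V_def using pos by blast
    ultimately obtain e where e: "e > 0" "ball z e \<subseteq> V" using open_contains_ball by blast
    define w where "w = z - (e/(2*norm a)) *\<^sub>R a"
    have "dist z w = e/2" unfolding w_def using anz e by (simp add: dist_norm)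
    hence "w \<in> V" using e by auto
    hence "w \<in> solutions T" using eq unfolding V_def solutions_def by (auto intro: less_imp_le)
    hence "inner a w \<ge> 0" using aT unfolding solutions_def by blast
    moreover have "inner a w = - (e/(2*norm a)) * (norm a)^2"
      unfolding w_def using az by (simp add: inner_diff_right power2_norm_eq_inner)
    moreover have "(e/(2*norm a)) * (norm a)^2 > 0" using e anz by simp
    ultimately show False by linarith
  qed
  then obtain a' where a'T: "a' \<in> T'" and a'z: "inner a' z = 0" by blast
  define U where "U = {x. \<forall>b\<in>T-{a}. inner b x > 0}"
  have "open U" unfolding U_def using open_pos_set finT by blast
  moreover have "z \<in> U" unfolding U_def using bz by blast
  ultimately obtain e where e: "e > 0" "ball z e \<subseteq> U" using open_contains_ball by blast
  have key: "inner a' v \<ge> 0" if av: "inner a v \<ge> 0" for v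
  proof -
    define s where "s = e / (2 * (norm v + 1))"
    have nv: "norm v + 1 > 0" using norm_ge_zero[of v] by linarith
    have s0: "s > 0" using nv unfolding s_def using e by simp
    have "norm (s *\<^sub>R v) = s * norm v" using s0 by simp
    also have "\<dots> < e" proof -
      have "s * norm v \<le> s * (norm v + 1)" using s0 by simp
      moreover have "s * (norm v + 1) = e / 2"
      proof -
        have gen: "\<And>N::real. N > 0 \<Longrightarrow> e/(2*N) * N = e/2" by simp
        show ?thesis unfolding s_def by (rule gen[OF nv])
      qed
      ultimately show ?thesis using e by linarith
    qed
    finally have "dist z (z + s *\<^sub>R v) < e" by (simp add: dist_norm)
    hence xU: "z + s *\<^sub>R v \<in> U" using e by auto
    have "z + s *\<^sub>R v \<in> solutions T"
      unfolding solutions_def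
    proof (intro CollectI ballI)
      fix b assume "b \<in> T"
      show "inner b (z + s *\<^sub>R v) \<ge> 0"
      proof (cases "b = a")
        case True thus ?thesis using az av s0 by (simp add: inner_add_right)
      next
        case False thus ?thesis using xU \<open>b \<in> T\<close> unfolding U_def by (auto intro: less_imp_le)
      qed
    qed
    hence "z + s *\<^sub>R v \<in> solutions T'" using eq by simp
    hence "inner a' (z + s *\<^sub>R v) \<ge> 0" using a'T unfolding solutions_def by blast
    hence "s * inner a' v \<ge> 0" using a'z by (simp add: inner_add_right)
    thus ?thesis using s0 by (simp add: zero_le_mult_iff)
  qed
  have orth: "inner a' v = 0" if "inner a v = 0" for v
    using key[of v] key[of "-v"] that by (simp add: inner_minus_right)
  have aa: "inner a a > 0" using anz by simp
  define c where "c = inner a' a / inner a a"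
  define v where "v = a' - c *\<^sub>R a"
  have "inner a v = 0" unfolding v_def c_def using aa by (simp add: inner_diff_right inner_commute)
  hence "inner a' v = 0" "inner a v = 0" using orth by auto
  hence "inner v v = 0" unfolding v_def by (simp add: inner_diff_left)
  hence v0: "a' = c *\<^sub>R a" unfolding v_def by simp
  have "inner a' a \<ge> 0" using key[of a] by simp
  hence "c \<ge> 0" unfolding c_def using aa by simp
  moreover have "c \<noteq> 0" using v0 nz a'T by auto
  ultimately have "c > 0" by simp
  thus ?thesis using v0 a'T by blast
qed

lemma interior_point:
  fixes S :: "(real^'n) set"
  assumes "ineq_set S" "pure S"
  shows "\<exists>x0. \<forall>b\<in>S. inner b x0 > 0"
proof -
  have fin: "finite S" using assms(1) unfolding ineq_set_def by simp
  have "\<forall>a\<in>S. \<exists>x. x \<in> solutions S \<and> inner a x \<noteq> 0"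
    using assms(2) unfolding pure_def implied_equality_def by blast
  then obtain X where X: "\<And>a. a \<in> S \<Longrightarrow> X a \<in> solutions S \<and> inner a (X a) \<noteq> 0" by metis
  have pos: "inner a (X a) > 0" if "a \<in> S" for a
    using X[OF that] that unfolding solutions_def by force
  have nn: "inner b (X a) \<ge> 0" if "a \<in> S" "b \<in> S" for a b
    using X[OF that(1)] that(2) unfolding solutions_def by blast
  have "inner b (\<Sum>a\<in>S. X a) > 0" if "b \<in> S" for b
  proof -
    have "inner b (X b) \<le> (\<Sum>a\<in>S. inner b (X a))"
      by (rule member_le_sum) (use that fin nn in auto)
    thus ?thesis using pos[OF that] by (simp add: inner_sum_right)
  qed
  thus ?thesis by blast
qed

lemma redundant_multiple:
  fixes S :: "(real^'n) set"
  assumes "f1 \<in> S" "f2 \<in> S" "f1 \<noteq> f2" "c > 0" "f1 = c *\<^sub>R f2"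
  shows "redundant S f1"
  unfolding redundant_def ineq_implies_def
proof (intro conjI allI impI)
  fix x assume "\<forall>b\<in>S - {f1}. 0 \<le> inner b x"
  hence "inner f2 x \<ge> 0" using assms by auto
  thus "inner f1 x \<ge> 0" using assms by simp
qed (use assms in auto)

lemma card_le_lemma:
  fixes A B :: "(real^'n) set"
  assumes "finite B" "\<forall>f\<in>A. \<exists>g\<in>B. triv_equiv_ineq f g"
    and "\<forall>f\<in>A. \<not> redundant A f"
  shows "card A \<le> card B"
proof -
  obtain h where h: "\<And>f. f \<in> A \<Longrightarrow> h f \<in> B \<and> triv_equiv_ineq f (h f)"
    using assms(2) by metis
  have "inj_on h A"
  proof (rule inj_onI)
    fix f1 f2 assume f: "f1 \<in> A" "f2 \<in> A" "h f1 = h f2"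
    obtain c1 where c1: "c1 > 0" "f1 = c1 *\<^sub>R h f1" using h[OF f(1)] unfolding triv_equiv_ineq_def by blast
    obtain c2 where c2: "c2 > 0" "f2 = c2 *\<^sub>R h f2" using h[OF f(2)] unfolding triv_equiv_ineq_def by blast
    have "(c1 / c2) *\<^sub>R f2 = ((c1 / c2) * c2) *\<^sub>R h f2" by (subst c2(2)) simp
    also have "\<dots> = c1 *\<^sub>R h f1" using c2(1) f(3) by simp
    finally have "f1 = (c1 / c2) *\<^sub>R f2" using c1(2) by simp
    moreover have "c1 / c2 > 0" using c1 c2 by simp
    ultimately show "f1 = f2" using redundant_multiple[of f1 A f2 "c1/c2"] f assms(3) by blast
  qed
  moreover have "h ` A \<subseteq> B" using h by blast
  ultimately show ?thesis using card_inj_on_le assms(1) by blast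
qed

lemma one_direction:
  fixes Sf Sg Sf' Sg' :: "(real^'n) set"
  assumes "ineq_set Sf" and "ineq_set Sg"
    and "pure Sf"
    and "minimal_characterization Sf' Sf"
    and "minimal_characterization Sg' Sg"
    and "equivalent Sf Sg"
  shows "\<forall>f\<in>Sf'. \<exists>g\<in>Sg'. triv_equiv_ineq g f"
proof
  fix f assume fS: "f \<in> Sf'"
  obtain x0 where x0: "\<forall>b\<in>Sf. inner b x0 > 0" using interior_point assms(1,3) by blast
  have sub: "Sf' \<subseteq> Sf" "Sg' \<subseteq> Sg" using assms(4,5) unfolding minimal_characterization_def by auto
  have finf: "finite Sf'" using sub assms(1) unfolding ineq_set_def using finite_subset by blast
  have fing: "finite Sg'" using sub assms(2) unfolding ineq_set_def using finite_subset by blast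
  have nz: "\<forall>a'\<in>Sg'. a' \<noteq> 0" using sub assms(2) unfolding ineq_set_def by blast
  have eq: "solutions Sg' = solutions Sf'" using assms(4,5,6)
    unfolding minimal_characterization_def equivalent_def by simp
  have irr: "\<not> ineq_implies (Sf' - {f}) f" using assms(4) fS
    unfolding minimal_characterization_def redundant_def by blast
  have "\<exists>a'\<in>Sg'. \<exists>c>0. a' = c *\<^sub>R f"
    by (rule facet_lemma[OF finf _ fS irr fing nz eq]) (use x0 sub in blast)
  thus "\<exists>g\<in>Sg'. triv_equiv_ineq g f" unfolding triv_equiv_ineq_def by blast
qed

lemma triv_sym:
  assumes "triv_equiv_ineq (g::real^'n) f" shows "triv_equiv_ineq f g"
proof -
  obtain c where "c > 0" "g = c *\<^sub>R f" using assms unfolding triv_equiv_ineq_def by blast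
  hence "1/c > 0" "f = (1/c) *\<^sub>R g" by auto
  thus ?thesis unfolding triv_equiv_ineq_def by blast
qed

theorem theorem4:
  fixes Sf Sg Sf' Sg' :: "(real^'n) set"
  assumes "ineq_set Sf" and "ineq_set Sg"
    and "pure Sf" and "pure Sg"
    and "minimal_characterization Sf' Sf"
    and "minimal_characterization Sg' Sg"
    and "equivalent Sf Sg"
  shows "triv_equiv_sets Sf' Sg'"
proof -
  have d1: "\<forall>f\<in>Sf'. \<exists>g\<in>Sg'. triv_equiv_ineq g f"
    by (rule one_direction[OF assms(1,2,3,5,6,7)])
  have e2: "equivalent Sg Sf" using assms(7) unfolding equivalent_def by simp
  have d2: "\<forall>g\<in>Sg'. \<exists>f\<in>Sf'. triv_equiv_ineq f g"
    by (rule one_direction[OF assms(2,1,4,6,5) e2])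
  have sub: "Sf' \<subseteq> Sf" "Sg' \<subseteq> Sg" using assms(5,6) unfolding minimal_characterization_def by auto
  have finf: "finite Sf'" using sub assms(1) unfolding ineq_set_def using finite_subset by blast
  have fing: "finite Sg'" using sub assms(2) unfolding ineq_set_def using finite_subset by blast
  have irf: "\<forall>f\<in>Sf'. \<not> redundant Sf' f" using assms(5) unfolding minimal_characterization_def by blast
  have irg: "\<forall>f\<in>Sg'. \<not> redundant Sg' f" using assms(6) unfolding minimal_characterization_def by blast
  have d1': "\<forall>f\<in>Sf'. \<exists>g\<in>Sg'. triv_equiv_ineq f g" using d1 triv_sym by blast
  have d2': "\<forall>g\<in>Sg'. \<exists>f\<in>Sf'. triv_equiv_ineq g f" using d2 triv_sym by blast
  have "card Sf' \<le> card Sg'" by (rule card_le_lemma[OF fing d1' irf])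
  moreover have "card Sg' \<le> card Sf'" by (rule card_le_lemma[OF finf d2' irg])
  ultimately show ?thesis unfolding triv_equiv_sets_def using d1' d2 by simp
qed

end
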